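(* For every $d\ge1$, $$\frac{\sqrt2^{\,d}}{(d+1)!\,d}\le H_{1,d}\le\frac{2^{d+1}}{(d+1)!}.$$
   Context: For integers $i,d\ge -1$ define $f_{-1,-1}=1$, $f_{-1,d}=0$ for $d\ge0$, $f_{i,-1}=0$ for $i\ge0$, and $f_{i,d}=(i+1)!\,S(d+1,i+1)$ for $i,d\ge0$, where $S(\cdot,\cdot)$ is the Stirling number of the second kind. For $d\ge0$ define rational numbers $F_{i,d}$, $-1\le i\le d$, by $F_{d,d}=1$ and recursively for $-1\le i\le d-1$, $F_{i,d}=\frac{1}{(d+1)!-(i+1)!}\sum_{j=i+1}^{d}f_{i,j}F_{j,d}$. Let $F_d(z)=\sum_{i=-1}^dF_{i,d}z^{d-i}$, and define the $H$-polynomial $H_d(z)=F_d(z-1)=\sum_{i=0}^{d+1}H_{i,d}z^{d+1-i}$, which defines the numbers $H_{i,d}$ (in particular $H_{1,d}=F_{0,d}$). *)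

theory Defs
  imports "HOL-Combinatorics.Stirling" "HOL-Computational_Algebra.Polynomial" Complex_Main
begin

definition fnum :: "int \<Rightarrow> int \<Rightarrow> real" where
  "fnum i d =
     (if i = -1 \<and> d = -1 then 1
      else if i = -1 \<or> d = -1 then 0
      else fact (nat (i + 1)) * real (Stirling (nat (d + 1)) (nat (i + 1))))"

function Fnum :: "int \<Rightarrow> int \<Rightarrow> real" where
  "Fnum i d =
     (if i = d then 1
      else if -1 \<le> i \<and> i < d then
        (1 / (fact (nat (d + 1)) - fact (nat (i + 1)))) *
          (\<Sum>j\<in>{i+1..d}. fnum i j * Fnum j d)
      else 0)"
  by auto
termination
  by (relation "measure (\<lambda>(i, d). nat (d - i))") auto

definition Fpoly :: "nat \<Rightarrow> real poly" where
  "Fpoly d = (\<Sum>i\<in>{-1..int d}. monom (Fnum i (int d)) (nat (int d - i)))"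

definition Hpoly :: "nat \<Rightarrow> real poly" where
  "Hpoly d = pcompose (Fpoly d) [:-1, 1:]"

definition Hnum :: "nat \<Rightarrow> nat \<Rightarrow> real" where
  "Hnum i d = coeff (Hpoly d) (d + 1 - i)"

end

theory Submission
  imports Defs
begin


lemma Stirling_0_right: "Stirling n 0 = (if n = 0 then 1 else 0)"
  by (cases n) auto

lemma Stirling_row_k0: "(\<Sum>m\<le>n. (n choose m) * Stirling m 0) = 1"
proof -
  have "(\<Sum>m\<le>n. (n choose m) * Stirling m 0) = (\<Sum>m\<le>n. if m = 0 then 1 else 0)"
    by (rule sum.cong) (auto simp: Stirling_0_right)
  also have "\<dots> = 1" by simp
  finally show ?thesis .
qed

lemma Stirling_sum_ident:
  "Stirling (Suc n) (Suc k) = (\<Sum>m\<le>n. (n choose m) * Stirling m k)"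
proof (induction n arbitrary: k)
  case 0
  then show ?case by (cases k) auto
next
  case (Suc n)
  show ?case
  proof (cases k)
    case 0
    then show ?thesis by (metis Stirling_1 Stirling_row_k0)
  next
    case (Suc k')
    have A: "(\<Sum>m\<le>Suc n. (Suc n choose m) * Stirling m k)
       = (\<Sum>m\<le>n. (Suc n choose Suc m) * Stirling (Suc m) k)"
      by (subst sum.atMost_Suc_shift) (simp add: Suc)
    also have "\<dots> = (\<Sum>m\<le>n. (n choose m) * Stirling (Suc m) k)
                    + (\<Sum>m\<le>n. (n choose Suc m) * Stirling (Suc m) k)"
      by (simp add: sum.distrib algebra_simps)
    also have "(\<Sum>m\<le>n. (n choose Suc m) * Stirling (Suc m) k) = (\<Sum>m\<le>n. (n choose m) * Stirling m k)"
    proof -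
      have "(\<Sum>m\<le>Suc n. (n choose m) * Stirling m k) = (\<Sum>m\<le>n. (n choose Suc m) * Stirling (Suc m) k)"
        by (subst sum.atMost_Suc_shift) (simp add: Suc)
      moreover have "(\<Sum>m\<le>Suc n. (n choose m) * Stirling m k) = (\<Sum>m\<le>n. (n choose m) * Stirling m k)"
        by simp
      ultimately show ?thesis by simp
    qed
    also have "(\<Sum>m\<le>n. (n choose m) * Stirling (Suc m) k)
       = k * (\<Sum>m\<le>n. (n choose m) * Stirling m k) + (\<Sum>m\<le>n. (n choose m) * Stirling m k')"
      by (simp add: Suc sum_distrib_left sum.distrib algebra_simps)
    finally have B: "(\<Sum>m\<le>Suc n. (Suc n choose m) * Stirling m k)
       = Suc k * (\<Sum>m\<le>n. (n choose m) * Stirling m k) + (\<Sum>m\<le>n. (n choose m) * Stirling m k')"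
      by simp
    show ?thesis unfolding B using Suc.IH[of k] Suc.IH[of k'] by (simp add: Suc)
  qed
qed




lemma Stirling_upper:
  "k \<le> n \<Longrightarrow> Stirling (Suc n) (Suc k) \<le> (n choose k) * (Suc k) ^ (n - k)"
proof (induction n arbitrary: k)
  case 0 then show ?case by simp
next
  case (Suc n)
  show ?case
  proof (cases "k = Suc n")
    case True then show ?thesis by simp
  next
    case False
    with Suc.prems have kn: "k \<le> n" by simp
    show ?thesis
    proof (cases k)
      case 0 then show ?thesis by (simp del: Stirling.simps)
    next
      case (Suc k')
      have "Stirling (Suc (Suc n)) (Suc k) = Suc k * Stirling (Suc n) (Suc k) + Stirling (Suc n) (Suc k')"
        using Suc by simp
      also have "\<dots> \<le> Suc k * ((n choose k) * (Suc k) ^ (n - k)) + (n choose k') * (Suc k') ^ (n - k')"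
        using Suc.IH[OF kn] Suc.IH[of k'] kn Suc by (intro add_mono mult_le_mono2) auto
      also have "(Suc k') ^ (n - k') \<le> (Suc k) ^ (n - k')"
        using Suc by (intro power_mono) auto
      also have "n - k' = Suc (n - k)" using kn Suc by simp
      also have "Suc k * ((n choose k) * (Suc k) ^ (n - k)) + (n choose k') * (Suc k) ^ Suc (n - k)
                 = ((n choose k) + (n choose k')) * (Suc k * (Suc k) ^ (n - k))"
        by (simp only: power_Suc) (simp only: algebra_simps)
      also have "Suc k * (Suc k) ^ (n - k) = (Suc k) ^ (Suc n - k)"
        using kn by (simp add: Suc_diff_le)
      also have "(n choose k) + (n choose k') = (Suc n choose k)"
        using Suc by simp
      finally show ?thesis by simp
    qed
  qed
qed

lemma fact_pow_le: "k \<le> n \<Longrightarrow> fact k * (Suc k) ^ (n - k) \<le> (fact n :: nat)"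
proof (induction n rule: dec_induct)
  case base then show ?case by simp
next
  case (step n)
  have "fact k * (Suc k) ^ (Suc n - k) = (fact k * (Suc k) ^ (n - k)) * Suc k"
    using step.hyps by (simp add: Suc_diff_le algebra_simps)
  also have "\<dots> \<le> fact n * Suc n"
    using step.IH step.hyps by (intro mult_le_mono) auto
  finally show ?case by (simp add: algebra_simps)
qed

lemma upper_comb:
  assumes "k \<le> n"
  shows "fact k * (\<Sum>m\<le>n. (n choose m) * Stirling m k) \<le> (n choose k) * (fact n :: nat)"
proof -
  have "fact k * (\<Sum>m\<le>n. (n choose m) * Stirling m k) = fact k * Stirling (Suc n) (Suc k)"
    by (simp add: Stirling_sum_ident del: Stirling.simps)
  also have "\<dots> \<le> fact k * ((n choose k) * (Suc k) ^ (n - k))"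
    using Stirling_upper[OF assms] by simp
  also have "\<dots> = (n choose k) * (fact k * (Suc k) ^ (n - k))" by simp
  also have "\<dots> \<le> (n choose k) * fact n"
    using fact_pow_le[OF assms] by simp
  finally show ?thesis .
qed

lemma Stirling_first_block:
  "Suc k * Stirling N (Suc k) = (\<Sum>j<N. (N choose j) * Stirling j k)"
proof -
  have "Stirling (Suc N) (Suc k) = (\<Sum>j\<le>N. (N choose j) * Stirling j k)"
    by (rule Stirling_sum_ident)
  also have "\<dots> = (\<Sum>j<N. (N choose j) * Stirling j k) + Stirling N k"
    by (simp add: lessThan_Suc_atMost[symmetric])
  finally show ?thesis by simp
qed

definition fub :: "nat \<Rightarrow> nat" where
  "fub n = (\<Sum>k\<le>n. fact k * Stirling n k)"

lemma fub_ext: "n \<le> M \<Longrightarrow> fub n = (\<Sum>k\<le>M. fact k * Stirling n k)"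
proof -
  assume "n \<le> M"
  have "(\<Sum>k\<le>M. fact k * Stirling n k) = (\<Sum>k\<le>n. fact k * Stirling n k) + (\<Sum>k\<in>{n<..M}. fact k * Stirling n k)"
    using \<open>n \<le> M\<close> by (subst sum.union_disjoint[symmetric]) (auto intro!: sum.cong)
  also have "(\<Sum>k\<in>{n<..M}. fact k * Stirling n k) = 0" by simp
  finally show ?thesis by (simp add: fub_def)
qed

lemma fub_rec: "fub (Suc n) = (\<Sum>j<Suc n. (Suc n choose j) * fub j)"
proof -
  have "fub (Suc n) = (\<Sum>k\<le>n. fact (Suc k) * Stirling (Suc n) (Suc k))"
    unfolding fub_def by (subst sum.atMost_Suc_shift) simp
  also have "\<dots> = (\<Sum>k\<le>n. fact k * (Suc k * Stirling (Suc n) (Suc k)))"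
    by (simp add: algebra_simps)
  also have "\<dots> = (\<Sum>k\<le>n. fact k * (\<Sum>j<Suc n. (Suc n choose j) * Stirling j k))"
    by (simp only: Stirling_first_block)
  also have "\<dots> = (\<Sum>j<Suc n. (Suc n choose j) * (\<Sum>k\<le>n. fact k * Stirling j k))"
    by (simp add: sum_distrib_left sum_distrib_right algebra_simps sum.swap[of _ "{..n}"])
  also have "\<dots> = (\<Sum>j<Suc n. (Suc n choose j) * fub j)"
    by (intro sum.cong refl) (simp add: fub_ext[symmetric])
  finally show ?thesis .
qed

lemma fub_pos: "fub n \<ge> 1"
  unfolding fub_def
proof -
  have "1 \<le> fact n * Stirling n n" by simp
  also have "\<dots> \<le> (\<Sum>k\<le>n. fact k * Stirling n k)"
    by (rule member_le_sum) auto
  finally show "1 \<le> (\<Sum>k\<le>n. fact k * Stirling n k)" .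
qed




lemma binom_fact_real: "k \<le> n \<Longrightarrow> real (n choose k) * fact k * fact (n - k) = fact n"
proof -
  assume "k \<le> n"
  from binomial_fact_lemma[OF this] have "fact k * fact (n - k) * (n choose k) = (fact n :: nat)" .
  then have "real (fact k * fact (n - k) * (n choose k)) = real (fact n)" by simp
  then show ?thesis by (simp add: algebra_simps)
qed

lemma aux_mul: "(c::real) * f * k = N \<Longrightarrow> k \<noteq> 0 \<Longrightarrow> c * (f * x) = N * x / k"
  by (drule sym) simp

lemma fub_lower: "n \<ge> 1 \<Longrightarrow> fact n * sqrt 2 ^ (n - 1) \<le> real (fub n)"
proof (induction n rule: less_induct)
  case (less n)
  define s where "s = sqrt (2::real)"
  have s2: "s * s = 2" unfolding s_def by simp
  have s0: "s \<ge> 0" unfolding s_def by simp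
  have s1: "s \<le> 13/9"
    unfolding s_def by (rule real_le_lsqrt) (auto simp: power2_eq_square)
  have f1: "fub 1 = 1" by (simp add: fub_def)
  have f2: "fub 2 = 3" by (simp add: fub_def eval_nat_numeral)
  have f3: "fub 3 = 13" by (simp add: fub_def eval_nat_numeral)
  have "n = 1 \<or> n = 2 \<or> n = 3 \<or> (\<exists>m. n = m + 4)" using less.prems by presburger
  then consider "n = 1" | "n = 2" | "n = 3" | m where "n = m + 4" by blast
  then show ?case
  proof cases
    case 1 then show ?thesis using f1 by simp
  next
    case 2
    have "sqrt 2 \<le> (3/2::real)" by (rule real_le_lsqrt) (auto simp: power2_eq_square)
    then show ?thesis using 2 by (simp add: f2)
  next
    case 3
    have "fact 3 * sqrt 2 ^ 2 = (12::real)" by (simp add: fact_numeral)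
    then show ?thesis using 3 by (simp add: f3)
  next
    case 4
    have IH1: "fact (m+1) * s ^ m \<le> real (fub (m+1))" using less.IH[of "m+1"] 4 by (simp add: s_def)
    have IH2: "fact (m+2) * s ^ (m+1) \<le> real (fub (m+2))" using less.IH[of "m+2"] 4 by (simp add: s_def)
    have IH3: "fact (m+3) * s ^ (m+2) \<le> real (fub (m+3))" using less.IH[of "m+3"] 4 by (simp add: s_def)
    have b1: "real (n choose (m+1)) * fact (m+1) * 6 = fact n"
      using binom_fact_real[of "m+1" n] 4 by (simp add: fact_numeral)
    have b2: "real (n choose (m+2)) * fact (m+2) * 2 = fact n"
      using binom_fact_real[of "m+2" n] 4 by (simp add: fact_numeral)
    have b3: "real (n choose (m+3)) * fact (m+3) = fact n"
      using binom_fact_real[of "m+3" n] 4 by simp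
    have "fub n = (\<Sum>j<n. (n choose j) * fub j)"
      using fub_rec[of "m+3"] 4 by (simp add: add.commute)
    then have "real (fub n) = (\<Sum>j<n. real (n choose j) * real (fub j))" by simp
    also have "\<dots> \<ge> (\<Sum>j\<in>{m+1, m+2, m+3}. real (n choose j) * real (fub j))"
      by (rule sum_mono2) (use 4 in auto)
    finally have "real (fub n) \<ge> real (n choose (m+1)) * real (fub (m+1))
        + real (n choose (m+2)) * real (fub (m+2)) + real (n choose (m+3)) * real (fub (m+3))"
      by simp
    moreover have "real (n choose (m+1)) * real (fub (m+1)) \<ge> real (n choose (m+1)) * (fact (m+1) * s ^ m)"
      by (rule mult_left_mono[OF IH1]) simp
    moreover have "real (n choose (m+2)) * real (fub (m+2)) \<ge> real (n choose (m+2)) * (fact (m+2) * s ^ (m+1))"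
      by (rule mult_left_mono[OF IH2]) simp
    moreover have "real (n choose (m+3)) * real (fub (m+3)) \<ge> real (n choose (m+3)) * (fact (m+3) * s ^ (m+2))"
      by (rule mult_left_mono[OF IH3]) simp
    moreover have "real (n choose (m+1)) * (fact (m+1) * s ^ m) = fact n * s ^ m / 6"
      by (rule aux_mul[OF b1]) simp
    moreover have "real (n choose (m+2)) * (fact (m+2) * s ^ (m+1)) = fact n * s ^ m * s / 2"
    proof -
      have "real (n choose (m+2)) * (fact (m+2) * s ^ (m+1)) = fact n * s ^ (m+1) / 2"
        by (rule aux_mul[OF b2]) simp
      then show ?thesis by (simp add: algebra_simps)
    qed
    moreover have "real (n choose (m+3)) * (fact (m+3) * s ^ (m+2)) = fact n * s ^ m * 2"
    proof -
      have h: "real (n choose (m+3)) * (fact (m+3) * s ^ (m+2)) = fact n * s ^ (m+2)"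
        using b3 by (simp only: mult.assoc[symmetric])
      have e: "s ^ (m+2) = s ^ m * 2" using s2 by (simp add: power_add eval_nat_numeral)
      show ?thesis unfolding h unfolding e by (simp only: mult.assoc)
    qed
    moreover have "fact n * s ^ m / 6 + fact n * s ^ m * s / 2 + fact n * s ^ m * 2 \<ge> fact n * s ^ (n - 1)"
    proof -
      have e1: "s ^ (n - 1) = s ^ m * 2 * s" using 4 s2 by (simp add: power_add algebra_simps eval_nat_numeral)
      moreover have "fact n * s ^ m * (1/6 + s/2 + 2 - 2 * s) \<ge> 0"
        using s0 s1 by (intro mult_nonneg_nonneg) auto
      moreover have "fact n * s ^ m / 6 + fact n * s ^ m * s / 2 + fact n * s ^ m * 2 - fact n * (s ^ m * 2 * s)
          = fact n * s ^ m * (1/6 + s/2 + 2 - 2 * s)" by (simp add: algebra_simps)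
      ultimately show ?thesis unfolding e1 by linarith
    qed
    ultimately show ?thesis unfolding s_def by linarith
  qed
qed




declare Fnum.simps[simp del]

lemma Fnum_rec_nat:
  assumes "i < d"
  shows "Fnum (int i) (int d) =
    (\<Sum>j\<in>{Suc i..d}. fact (Suc i) * real (Stirling (Suc j) (Suc i)) * Fnum (int j) (int d))
      / (fact (Suc d) - fact (Suc i))"
proof -
  have "Fnum (int i) (int d) = (1 / (fact (nat (int d + 1)) - fact (nat (int i + 1)))) *
          (\<Sum>j\<in>{int i+1..int d}. fnum (int i) j * Fnum j (int d))"
    using assms by (subst Fnum.simps) simp
  also have "{int i+1..int d} = int ` {Suc i..d}"
    by (simp add: image_int_atLeastAtMost)
  also have "(\<Sum>j\<in>int ` {Suc i..d}. fnum (int i) j * Fnum j (int d))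
      = (\<Sum>j\<in>{Suc i..d}. fnum (int i) (int j) * Fnum (int j) (int d))"
    by (subst sum.reindex) (auto simp: inj_on_def)
  also have "\<dots> = (\<Sum>j\<in>{Suc i..d}. fact (Suc i) * real (Stirling (Suc j) (Suc i)) * Fnum (int j) (int d))"
    by (intro sum.cong refl) (simp add: fnum_def nat_add_distrib)
  finally show ?thesis by (simp add: nat_add_distrib)
qed

lemma Fnum_diag: "Fnum (int d) (int d) = 1"
  by (subst Fnum.simps) simp

lemma Fnum_nonneg: "i \<le> d \<Longrightarrow> Fnum (int i) (int d) \<ge> 0"
proof (induction "d - i" arbitrary: i rule: less_induct)
  case less
  show ?case
  proof (cases "i = d")
    case True then show ?thesis by (simp add: Fnum_diag)
  next
    case False
    with less.prems have id: "i < d" by simp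
    have den: "fact (Suc d) - fact (Suc i) > (0::real)"
      using id fact_less_mono[of "Suc i" "Suc d", where 'a=real] by simp
    have "(\<Sum>j\<in>{Suc i..d}. fact (Suc i) * real (Stirling (Suc j) (Suc i)) * Fnum (int j) (int d)) \<ge> 0"
      by (intro sum_nonneg mult_nonneg_nonneg) (use less.hyps in auto)
    then show ?thesis unfolding Fnum_rec_nat[OF id] using den by simp
  qed
qed

lemma Fnum_m1: "Fnum (-1) (int d) = 0"
proof -
  have "Fnum (-1) (int d) = (1 / (fact (nat (int d + 1)) - fact (nat (-1 + 1)))) *
          (\<Sum>j\<in>{-1+1..int d}. fnum (-1) j * Fnum j (int d))"
    by (subst Fnum.simps) simp
  also have "(\<Sum>j\<in>{-1+1..int d}. fnum (-1) j * Fnum j (int d)) = 0"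
    by (intro sum.neutral) (auto simp: fnum_def)
  finally show ?thesis by simp
qed

lemma pcompose_monom': "pcompose (monom c n) q = smult c (q ^ n)"
  by (induction n) (simp_all add: monom_Suc pcompose_pCons monom_0 pcompose_const algebra_simps)

lemma Hnum_1: "Hnum 1 d = Fnum 0 (int d)"
proof -
  define q :: "real poly" where "q = [:-1, 1:]"
  have "Hnum 1 d = coeff (Hpoly d) d" by (simp add: Hnum_def)
  also have "Hpoly d = (\<Sum>i\<in>{-1..int d}. smult (Fnum i (int d)) (q ^ nat (int d - i)))"
    by (simp add: Hpoly_def Fpoly_def pcompose_sum pcompose_monom' q_def)
  also have "coeff \<dots> d = (\<Sum>i\<in>{-1..int d}. Fnum i (int d) * coeff (q ^ nat (int d - i)) d)"
    by (simp add: coeff_sum)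
  also have "\<dots> = (\<Sum>i\<in>{-1..int d}. if i = 0 then Fnum 0 (int d) else 0)"
  proof (intro sum.cong refl)
    fix i assume i: "i \<in> {-1..int d}"
    show "Fnum i (int d) * coeff (q ^ nat (int d - i)) d = (if i = 0 then Fnum 0 (int d) else 0)"
    proof (cases "i = 0")
      case True then show ?thesis by (simp add: q_def coeff_linear_power)
    next
      case False
      show ?thesis
      proof (cases "i = -1")
        case True then show ?thesis by (simp add: Fnum_m1)
      next
        case False
        with \<open>i \<noteq> 0\<close> i have "nat (int d - i) < d" by auto
        then have "coeff (q ^ nat (int d - i)) d = 0"
          by (intro coeff_eq_0) (simp add: q_def degree_linear_power)
        then show ?thesis using \<open>i \<noteq> 0\<close> by simp
      qed
    qed
  qed
  also have "\<dots> = Fnum 0 (int d)" by (simp add: sum.delta)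
  finally show ?thesis .
qed




declare Stirling.simps(4)[simp del] binomial_Suc_Suc[simp del] fact_Suc[simp del]


lemma comb_split:
  assumes "i < d"
  shows "fact (Suc i) * ((Suc d choose Suc i) + (\<Sum>j\<in>{Suc i..d}. Stirling (Suc j) (Suc i) * (Suc d choose Suc j)))
          \<le> (Suc d choose Suc i) * (fact (Suc d) :: nat)"
proof -
  have "(\<Sum>m\<le>Suc d. (Suc d choose m) * Stirling m (Suc i))
      = (\<Sum>j\<le>d. Stirling (Suc j) (Suc i) * (Suc d choose Suc j))"
    by (subst sum.atMost_Suc_shift) (simp add: mult.commute)
  also have "\<dots> = (\<Sum>j\<in>{i..d}. Stirling (Suc j) (Suc i) * (Suc d choose Suc j))"
    by (rule sum.mono_neutral_right) auto
  also have "\<dots> = (Suc d choose Suc i) + (\<Sum>j\<in>{Suc i..d}. Stirling (Suc j) (Suc i) * (Suc d choose Suc j))"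
    using assms by (subst sum.atLeast_Suc_atMost) auto
  finally have e: "(\<Sum>m\<le>Suc d. (Suc d choose m) * Stirling m (Suc i)) = \<dots>" .
  show ?thesis using upper_comb[of "Suc i" "Suc d"] assms unfolding e by simp
qed

lemma Fnum_upper: "i \<le> d \<Longrightarrow> Fnum (int i) (int d) \<le> real (Suc d choose Suc i)"
proof (induction "d - i" arbitrary: i rule: less_induct)
  case less
  show ?case
  proof (cases "i = d")
    case True then show ?thesis by (simp add: Fnum_diag)
  next
    case False
    with less.prems have id: "i < d" by simp
    define lam :: real where "lam = fact (Suc d)"
    define c :: real where "c = fact (Suc i)"
    define C :: real where "C = real (Suc d choose Suc i)"
    define R :: real where "R = (\<Sum>j\<in>{Suc i..d}. real (Stirling (Suc j) (Suc i)) * real (Suc d choose Suc j))"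
    have den: "lam - c > 0"
      using id fact_less_mono[of "Suc i" "Suc d", where 'a=real] by (simp add: lam_def c_def)
    have key: "c * (C + R) \<le> C * lam"
    proof -
      have "real (fact (Suc i) * ((Suc d choose Suc i) + (\<Sum>j\<in>{Suc i..d}. Stirling (Suc j) (Suc i) * (Suc d choose Suc j))))
          \<le> real ((Suc d choose Suc i) * (fact (Suc d) :: nat))"
        using comb_split[OF id] by (simp only: of_nat_le_iff)
      then show ?thesis by (simp add: c_def C_def R_def lam_def of_nat_sum)
    qed
    have "(\<Sum>j\<in>{Suc i..d}. fact (Suc i) * real (Stirling (Suc j) (Suc i)) * Fnum (int j) (int d))
        \<le> (\<Sum>j\<in>{Suc i..d}. fact (Suc i) * real (Stirling (Suc j) (Suc i)) * real (Suc d choose Suc j))"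
      by (intro sum_mono mult_left_mono) (use less.hyps in auto)
    also have "\<dots> = c * R" by (simp add: c_def R_def sum_distrib_left mult.assoc)
    also have "\<dots> \<le> (lam - c) * C" using key by (simp add: algebra_simps)
    finally have "(\<Sum>j\<in>{Suc i..d}. fact (Suc i) * real (Stirling (Suc j) (Suc i)) * Fnum (int j) (int d))
        \<le> (lam - c) * C" .
    then show ?thesis unfolding Fnum_rec_nat[OF id] using den
      by (simp add: divide_le_eq lam_def c_def C_def mult.commute)
  qed
qed

lemma Fnum_lower:
  assumes "i < d"
  shows "Fnum (int i) (int d) \<ge> fact (Suc i) * real (Stirling (Suc d) (Suc i)) / fact (Suc d)"
proof -
  define lam :: real where "lam = fact (Suc d)"
  define c :: real where "c = fact (Suc i)"
  define S where "S = (\<Sum>j\<in>{Suc i..d}. fact (Suc i) * real (Stirling (Suc j) (Suc i)) * Fnum (int j) (int d))"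
  have den: "lam - c > 0"
    using assms fact_less_mono[of "Suc i" "Suc d", where 'a=real] by (simp add: lam_def c_def)
  have c0: "c > 0" by (simp add: c_def)
  have "c * real (Stirling (Suc d) (Suc i)) = fact (Suc i) * real (Stirling (Suc d) (Suc i)) * Fnum (int d) (int d)"
    by (simp add: Fnum_diag c_def)
  also have "\<dots> \<le> S" unfolding S_def
    by (rule member_le_sum[where f = "\<lambda>j. fact (Suc i) * real (Stirling (Suc j) (Suc i)) * Fnum (int j) (int d)"])
       (use assms in \<open>auto intro!: mult_nonneg_nonneg Fnum_nonneg\<close>)
  finally have s1: "c * real (Stirling (Suc d) (Suc i)) \<le> S" .
  have S0: "S \<ge> 0" unfolding S_def by (intro sum_nonneg mult_nonneg_nonneg Fnum_nonneg) auto
  have "c * real (Stirling (Suc d) (Suc i)) / lam \<le> S / lam"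
    using s1 by (simp add: divide_right_mono lam_def)
  also have "S / lam \<le> S / (lam - c)"
    using den c0 S0 by (intro divide_left_mono) auto
  also have "S / (lam - c) = Fnum (int i) (int d)"
    unfolding Fnum_rec_nat[OF assms] S_def lam_def c_def by simp
  finally show ?thesis by (simp add: lam_def c_def)
qed

lemma Fnum_sum:
  assumes "d \<ge> 1"
  shows "fact (Suc d) * Fnum 0 (int d) = (\<Sum>j\<le>d. Fnum (int j) (int d))"
proof -
  have r: "Fnum (int 0) (int d) = (\<Sum>j\<in>{Suc 0..d}. Fnum (int j) (int d)) / (fact (Suc d) - 1)"
    using Fnum_rec_nat[of 0 d] assms by simp
  have den: "fact (Suc d) - 1 > (0::real)"
    using assms fact_less_mono[of "Suc 0" "Suc d", where 'a=real] by simp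
  have "(\<Sum>j\<le>d. Fnum (int j) (int d)) = (\<Sum>j\<in>{0..d}. Fnum (int j) (int d))"
    by (simp add: atMost_atLeast0)
  also have "\<dots> = Fnum 0 (int d) + (\<Sum>j\<in>{Suc 0..d}. Fnum (int j) (int d))"
    by (subst sum.atLeast_Suc_atMost) auto
  also have "(\<Sum>j\<in>{Suc 0..d}. Fnum (int j) (int d)) = Fnum 0 (int d) * (fact (Suc d) - 1)"
    using r den by (simp add: field_simps)
  finally show ?thesis by (simp add: algebra_simps)
qed

theorem proposition2p13:
  fixes d :: nat
  assumes "d \<ge> 1"
  shows "sqrt 2 ^ d / (fact (d + 1) * real d) \<le> Hnum 1 d
         \<and> Hnum 1 d \<le> 2 ^ (d + 1) / fact (d + 1)"
proof -
  define lam :: real where "lam = fact (Suc d)"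
  have lam0: "lam > 0" by (simp add: lam_def)
  define T where "T = (\<Sum>j\<le>d. Fnum (int j) (int d))"
  have H: "Hnum 1 d = T / lam"
    using Fnum_sum[OF assms] Hnum_1[of d] lam0 by (simp add: T_def lam_def field_simps)
  have up: "T \<le> 2 ^ (d + 1)"
  proof -
    have "T \<le> (\<Sum>j\<le>d. real (Suc d choose Suc j))"
      unfolding T_def by (intro sum_mono Fnum_upper) auto
    also have "\<dots> \<le> 1 + (\<Sum>j\<le>d. real (Suc d choose Suc j))" by simp
    also have "\<dots> = (\<Sum>k\<le>Suc d. real (Suc d choose k))"
      by (subst sum.atMost_Suc_shift) simp
    also have "\<dots> = 2 ^ (d + 1)"
      using choose_row_sum[of "Suc d"] by (simp flip: of_nat_sum)
    finally show ?thesis .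
  qed
  have lo: "T \<ge> sqrt 2 ^ d"
  proof -
    have "(\<Sum>j\<le>d. fact (Suc j) * real (Stirling (Suc d) (Suc j)) / lam) \<le> T"
      unfolding T_def
    proof (intro sum_mono)
      fix j assume "j \<in> {..d}"
      then have "j < d \<or> j = d" by auto
      then show "fact (Suc j) * real (Stirling (Suc d) (Suc j)) / lam \<le> Fnum (int j) (int d)"
      proof
        assume "j < d" then show ?thesis using Fnum_lower[of j d] by (simp add: lam_def)
      next
        assume "j = d" then show ?thesis using lam0 by (simp add: Fnum_diag lam_def)
      qed
    qed
    moreover have "(\<Sum>j\<le>d. fact (Suc j) * real (Stirling (Suc d) (Suc j)) / lam) = real (fub (Suc d)) / lam"
    proof -
      have "fub (Suc d) = (\<Sum>j\<le>d. fact (Suc j) * Stirling (Suc d) (Suc j))"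
        unfolding fub_def by (subst sum.atMost_Suc_shift) simp
      then have "real (fub (Suc d)) = (\<Sum>j\<le>d. fact (Suc j) * real (Stirling (Suc d) (Suc j)))"
        by (simp add: of_nat_sum)
      then show ?thesis by (simp add: sum_divide_distrib)
    qed
    moreover have "real (fub (Suc d)) \<ge> lam * sqrt 2 ^ d"
      using fub_lower[of "Suc d"] by (simp add: lam_def)
    ultimately have "real (fub (Suc d)) / lam \<le> T" and "lam * sqrt 2 ^ d \<le> real (fub (Suc d))" by simp_all
    then have "real (fub (Suc d)) \<le> T * lam" using lam0 by (simp add: divide_le_eq)
    with \<open>lam * sqrt 2 ^ d \<le> real (fub (Suc d))\<close> have "lam * sqrt 2 ^ d \<le> lam * T" by (simp add: mult.commute)
    then show ?thesis using lam0 by simp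
  qed
  have "sqrt 2 ^ d / (fact (d + 1) * real d) \<le> sqrt 2 ^ d / lam"
    using assms lam0 by (simp add: lam_def divide_left_mono)
  also have "\<dots> \<le> T / lam" using lo lam0 by (simp add: divide_right_mono)
  finally have A: "sqrt 2 ^ d / (fact (d + 1) * real d) \<le> Hnum 1 d" using H by simp
  have B: "Hnum 1 d \<le> 2 ^ (d + 1) / fact (d + 1)"
    using H up lam0 by (simp add: lam_def divide_right_mono)
  show ?thesis using A B by simp
qed


end
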